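(* If \(A\) is a finite geometrically proper set of positive bump functions in \(\operatorname{Homeo}_+(I)\), then the maximal stretched transition chains of \(A\) (regarded as subsets of \(A\)) partition the set of nonisolated elements of \(A\).
   Context: \(I=[0,1]\). A positive bump is an element of \(\operatorname{Homeo}_+(I)\) whose support \(\{t: ta\neq t\}\) is a single open interval \((x,y)\) on which \(ta>t\); its transition points are \(x\) (left) and \(y\) (right). A transition point of \(A\) is a transition point of some element of \(A\). \(A\) is geometrically proper if no point is a left transition point of two distinct elements of \(A\), nor a right transition point of two distinct elements. An element of \(A\) is isolated if its support contains no transition point of \(A\). A sequence \((a_i\mid i\le k)\) of nonisolated elements of \(A\), with \(\operatorname{supt}(a_i)=(x_i,y_i)\), is a stretched transition chain of \(A\) if (1) for all \(i<k\), \(x_i<x_{i+1}<y_i<y_{i+1}\), and (2) no transition point of \(A\) lies in any interval \((x_{i+1},y_i)\). It is maximal if it is maximal under containment when regarded as a subset of \(A\). *)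

theory Defs
  imports "HOL-Analysis.Analysis" "HOL-Library.Disjoint_Sets"
begin

text \<open>Elements of Homeo_+(I), I = [0,1], are represented by functions real => real
  that restrict to an increasing self-homeomorphism of [0,1] and are the identity outside
  [0,1] (canonical representative, so that distinct elements are distinct functions).
  The paper's right-action notation t a is written a t.\<close>

definition homeo_plus :: "(real \<Rightarrow> real) \<Rightarrow> bool" where
  "homeo_plus a \<longleftrightarrow> (\<exists>g. homeomorphism {0..1} {0..1} a g) \<and> strict_mono_on {0..1} a
     \<and> (\<forall>t. t \<notin> {0..1} \<longrightarrow> a t = t)"

definition supt :: "(real \<Rightarrow> real) \<Rightarrow> real set" where
  "supt a = {t \<in> {0..1}. a t \<noteq> t}"

definition positive_bump :: "(real \<Rightarrow> real) \<Rightarrow> bool" where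
  "positive_bump a \<longleftrightarrow> homeo_plus a \<and>
     (\<exists>x y. x < y \<and> supt a = {x<..<y} \<and> (\<forall>t\<in>{x<..<y}. a t > t))"

definition ltp :: "(real \<Rightarrow> real) \<Rightarrow> real" where "ltp a = Inf (supt a)"
definition rtp :: "(real \<Rightarrow> real) \<Rightarrow> real" where "rtp a = Sup (supt a)"

definition trans_pts :: "(real \<Rightarrow> real) set \<Rightarrow> real set" where
  "trans_pts A = ltp ` A \<union> rtp ` A"

definition geom_proper :: "(real \<Rightarrow> real) set \<Rightarrow> bool" where
  "geom_proper A \<longleftrightarrow> (\<forall>a\<in>A. \<forall>b\<in>A. a \<noteq> b \<longrightarrow> ltp a \<noteq> ltp b \<and> rtp a \<noteq> rtp b)"

definition isolated :: "(real \<Rightarrow> real) set \<Rightarrow> (real \<Rightarrow> real) \<Rightarrow> bool" where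
  "isolated A a \<longleftrightarrow> supt a \<inter> trans_pts A = {}"

definition stc_seq :: "(real \<Rightarrow> real) set \<Rightarrow> (nat \<Rightarrow> real \<Rightarrow> real) \<Rightarrow> nat \<Rightarrow> bool" where
  "stc_seq A c k \<longleftrightarrow>
     (\<forall>i\<le>k. c i \<in> A \<and> \<not> isolated A (c i)) \<and>
     (\<forall>i<k. ltp (c i) < ltp (c (Suc i)) \<and> ltp (c (Suc i)) < rtp (c i)
            \<and> rtp (c i) < rtp (c (Suc i))) \<and>
     (\<forall>i<k. trans_pts A \<inter> {ltp (c (Suc i))<..<rtp (c i)} = {})"

definition stc :: "(real \<Rightarrow> real) set \<Rightarrow> (real \<Rightarrow> real) set \<Rightarrow> bool" where
  "stc A C \<longleftrightarrow> (\<exists>c k. stc_seq A c k \<and> C = c ` {..k})"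

definition maximal_stc :: "(real \<Rightarrow> real) set \<Rightarrow> (real \<Rightarrow> real) set \<Rightarrow> bool" where
  "maximal_stc A C \<longleftrightarrow> stc A C \<and> (\<forall>D. stc A D \<and> C \<subseteq> D \<longrightarrow> D = C)"

end

theory Submission
  imports Defs
begin

definition edge :: "(real \<Rightarrow> real) set \<Rightarrow> (real \<Rightarrow> real) \<Rightarrow> (real \<Rightarrow> real) \<Rightarrow> bool" where
  "edge A a b \<longleftrightarrow> a \<in> A \<and> b \<in> A \<and> ltp a < ltp b \<and> ltp b < rtp a \<and> rtp a < rtp b
     \<and> trans_pts A \<inter> {ltp b<..<rtp a} = {}"

lemma stc_edge: "stc_seq A c k \<Longrightarrow> m < k \<Longrightarrow> edge A (c m) (c (Suc m))"
  unfolding stc_seq_def edge_def by auto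

lemma succ_unique:
  assumes gp: "geom_proper A" and e1: "edge A a b" and e2: "edge A a b'"
  shows "b = b'"
proof -
  have tb: "ltp b \<in> trans_pts A" "ltp b' \<in> trans_pts A"
    using e1 e2 unfolding edge_def trans_pts_def by auto
  have "ltp b = ltp b'"
  proof (rule ccontr)
    assume "ltp b \<noteq> ltp b'"
    then consider "ltp b < ltp b'" | "ltp b' < ltp b" by linarith
    then show False
    proof cases
      case 1 then show ?thesis using e1 e2 tb unfolding edge_def by auto
    next
      case 2 then show ?thesis using e1 e2 tb unfolding edge_def by auto
    qed
  qed
  then show ?thesis using gp e1 e2 unfolding geom_proper_def edge_def by metis
qed

lemma pred_unique:
  assumes gp: "geom_proper A" and e1: "edge A a b" and e2: "edge A a' b"
  shows "a = a'"
proof -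
  have tb: "rtp a \<in> trans_pts A" "rtp a' \<in> trans_pts A"
    using e1 e2 unfolding edge_def trans_pts_def by auto
  have "rtp a = rtp a'"
  proof (rule ccontr)
    assume "rtp a \<noteq> rtp a'"
    then consider "rtp a < rtp a'" | "rtp a' < rtp a" by linarith
    then show False
    proof cases
      case 1 then show ?thesis using e1 e2 tb unfolding edge_def by auto
    next
      case 2 then show ?thesis using e1 e2 tb unfolding edge_def by auto
    qed
  qed
  then show ?thesis using gp e1 e2 unfolding geom_proper_def edge_def by metis
qed

lemma merge_chains:
  assumes gp: "geom_proper A" and sc: "stc_seq A c k" and sc': "stc_seq A c' k'"
    and ik: "i \<le> k" and jk: "j \<le> k'" and eq: "c i = c' j" and ji: "j \<le> i"
  shows "stc A (c ` {..k} \<union> c' ` {..k'})"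
proof -
  define s where "s = i - j"
  have bwd: "c' (j - t) = c (i - t)" if "t \<le> j" for t
    using that
  proof (induction t)
    case 0 then show ?case using eq by simp
  next
    case (Suc t)
    have e1: "edge A (c' (j - Suc t)) (c' (j - t))"
      using stc_edge[OF sc', of "j - Suc t"] Suc.prems jk Suc_diff_Suc[of t j] by simp
    have e2: "edge A (c (i - Suc t)) (c (i - t))"
      using stc_edge[OF sc, of "i - Suc t"] Suc.prems ik ji Suc_diff_Suc[of t i] by simp
    show ?case using pred_unique[OF gp e1] e2 Suc by simp
  qed
  have fwd: "c' (j + t) = c (i + t)" if "j + t \<le> k'" "i + t \<le> k" for t
    using that
  proof (induction t)
    case 0 then show ?case using eq by simp
  next
    case (Suc t)
    have e1: "edge A (c' (j + t)) (c' (j + Suc t))"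
      using stc_edge[OF sc', of "j + t"] Suc.prems by simp
    have e2: "edge A (c (i + t)) (c (i + Suc t))"
      using stc_edge[OF sc, of "i + t"] Suc.prems by simp
    show ?case using succ_unique[OF gp _ e2] e1 Suc by simp
  qed
  have lowm: "c' m = c (m + s)" if "m \<le> j" for m
    using bwd[of "j - m"] that ji unfolding s_def by (simp add: add.commute)
  show ?thesis
  proof (cases "k' - j \<le> k - i")
    case True
    have "c' m = c (m + s)" if "m \<le> k'" for m
    proof (cases "m \<le> j")
      case True then show ?thesis using lowm by simp
    next
      case False
      then show ?thesis using fwd[of "m - j"] that True ji unfolding s_def by (simp add: add.commute)
    qed
    then have "c' ` {..k'} \<subseteq> c ` {..k}"
      using True ji ik jk unfolding s_def by force
    then have "c ` {..k} \<union> c' ` {..k'} = c ` {..k}" by blast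
    then show ?thesis using sc unfolding stc_def by auto
  next
    case False
    define K where "K = k' + s"
    define d where "d m = (if m \<le> k then c m else c' (m - s))" for m
    have hi: "d m = c' (m - s)" if "i \<le> m" "m \<le> K" for m
    proof (cases "m \<le> k")
      case True
      then show ?thesis using fwd[of "m - i"] that False ji ik unfolding d_def s_def K_def
        by (simp add: add.commute)
    next
      case False then show ?thesis unfolding d_def by simp
    qed
    have kK: "k \<le> K" using False ji ik unfolding K_def s_def by simp
    have nodes: "d m \<in> A \<and> \<not> isolated A (d m)" if m: "m \<le> K" for m
    proof (cases "m \<le> k")
      case True then show ?thesis using sc unfolding d_def stc_seq_def by auto
    next
      case False
      then have "m - s \<le> k'" using m unfolding K_def by simp
      then show ?thesis using sc' False unfolding d_def stc_seq_def by auto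
    qed
    have edges: "edge A (d m) (d (Suc m))" if m: "m < K" for m
    proof (cases "Suc m \<le> k")
      case True then show ?thesis using stc_edge[OF sc, of m] unfolding d_def by simp
    next
      case F: False
      then have "i \<le> m" using ik by simp
      then have "d m = c' (m - s)" "d (Suc m) = c' (Suc (m - s))"
        using hi[of m] hi[of "Suc m"] m ji unfolding s_def by (auto simp: Suc_diff_le)
      moreover have "m - s < k'" using m `i \<le> m` ji unfolding K_def s_def by simp
      ultimately show ?thesis using stc_edge[OF sc'] by simp
    qed
    have sd: "stc_seq A d K"
      unfolding stc_seq_def using nodes edges unfolding edge_def by auto
    have "d ` {..K} = c ` {..k} \<union> c' ` {..k'}"
    proof (intro equalityI subsetI)
      fix x assume "x \<in> d ` {..K}"
      then obtain m where m: "m \<le> K" "x = d m" by auto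
      then show "x \<in> c ` {..k} \<union> c' ` {..k'}"
        unfolding d_def K_def by (cases "m \<le> k") auto
    next
      fix x assume "x \<in> c ` {..k} \<union> c' ` {..k'}"
      then consider m where "m \<le> k" "x = c m" | m where "m \<le> k'" "x = c' m" by auto
      then show "x \<in> d ` {..K}"
      proof cases
        case 1 then show ?thesis using kK unfolding d_def by (auto intro!: image_eqI[of _ _ m])
      next
        case 2
        show ?thesis
        proof (cases "m \<le> j")
          case True
          then have "x = d (m + s)" using lowm[of m] 2 ji ik unfolding d_def s_def by simp
          then show ?thesis using 2 unfolding K_def by auto
        next
          case False
          then have "x = d (m + s)" using hi[of "m + s"] 2 ji unfolding s_def K_def by simp
          then show ?thesis using 2 unfolding K_def by auto
        qed
      qed
    qed
    then show ?thesis using sd unfolding stc_def by metis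
  qed
qed

lemma stc_union:
  assumes gp: "geom_proper A" and C: "stc A C" and D: "stc A D" and x: "x \<in> C" "x \<in> D"
  shows "stc A (C \<union> D)"
proof -
  obtain c k where c: "stc_seq A c k" "C = c ` {..k}" using C unfolding stc_def by auto
  obtain c' k' where c': "stc_seq A c' k'" "D = c' ` {..k'}" using D unfolding stc_def by auto
  obtain i where i: "i \<le> k" "x = c i" using x c by auto
  obtain j where j: "j \<le> k'" "x = c' j" using x c' by auto
  show ?thesis
  proof (cases "j \<le> i")
    case True then show ?thesis using merge_chains[OF gp c(1) c'(1) i(1) j(1)] i j c c' by simp
  next
    case False
    then have "stc A (c' ` {..k'} \<union> c ` {..k})"
      using merge_chains[OF gp c'(1) c(1) j(1) i(1)] i j by simp
    then show ?thesis using c c' by (simp add: Un_commute)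
  qed
qed

lemma stc_sub: "stc A C \<Longrightarrow> C \<subseteq> {a \<in> A. \<not> isolated A a}"
  unfolding stc_def stc_seq_def by auto

lemma stc_ne: "stc A C \<Longrightarrow> C \<noteq> {}"
  unfolding stc_def by auto

theorem proposition4p1:
  fixes A :: "(real \<Rightarrow> real) set"
  assumes "finite A"
    and "\<forall>a\<in>A. positive_bump a"
    and "geom_proper A"
  shows "partition_on {a \<in> A. \<not> isolated A a} {C. maximal_stc A C}"
  unfolding partition_on_def
proof (intro conjI)
  show "\<Union> {C. maximal_stc A C} = {a \<in> A. \<not> isolated A a}"
  proof (intro equalityI subsetI)
    fix a assume "a \<in> \<Union> {C. maximal_stc A C}"
    then show "a \<in> {a \<in> A. \<not> isolated A a}"
      using stc_sub unfolding maximal_stc_def by blast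
  next
    fix a assume a: "a \<in> {a \<in> A. \<not> isolated A a}"
    let ?S = "{D. stc A D \<and> a \<in> D}"
    have s1: "stc A {a}"
      unfolding stc_def
    proof (intro exI conjI)
      show "stc_seq A (\<lambda>_. a) 0" using a unfolding stc_seq_def by auto
    qed auto
    have fin: "finite ?S"
      by (rule finite_subset[of _ "Pow A"]) (use stc_sub assms(1) in auto)
    obtain m where m: "m \<in> ?S" "\<forall>b\<in>?S. m \<le> b \<longrightarrow> m = b"
      using finite_has_maximal[OF fin] s1 by blast
    have "maximal_stc A m"
      unfolding maximal_stc_def using m by auto
    then show "a \<in> \<Union> {C. maximal_stc A C}" using m by auto
  qed
next
  show "disjoint {C. maximal_stc A C}"
    unfolding pairwise_def disjnt_def
  proof (intro ballI impI)
    fix C D assume C: "C \<in> {C. maximal_stc A C}" and D: "D \<in> {C. maximal_stc A C}"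
      and ne: "C \<noteq> D"
    show "C \<inter> D = {}"
    proof (rule ccontr)
      assume "C \<inter> D \<noteq> {}"
      then obtain x where "x \<in> C" "x \<in> D" by auto
      then have u: "stc A (C \<union> D)" using stc_union[OF assms(3)] C D
        unfolding maximal_stc_def by auto
      have "C \<union> D = C" "C \<union> D = D" using u C D unfolding maximal_stc_def by auto
      then show False using ne by auto
    qed
  qed
next
  show "{} \<notin> {C. maximal_stc A C}" using stc_ne unfolding maximal_stc_def by auto
qed

end
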